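(* Let $F$ be a finite group acting on the $n$-torus $\mathbb{T}^n$ by continuous group automorphisms, such that the quotient space $\mathbb{T}^n/F$ is homeomorphic to $\mathbb{T}^n$. Then $F$ acts trivially on $\mathbb{T}^n$. *)

theory Defs
  imports "HOL-Analysis.Analysis" "HOL-Algebra.Group_Action"
begin

text \<open>The n-torus, realised as the compact group of vectors of unit complex numbers
  (the product of n circles), with componentwise multiplication as group law.
  The dimension n is the cardinality of the finite index type 'n.\<close>

definition torus :: "(complex ^ 'n) set" where
  "torus = {z. \<forall>i. cmod (z $ i) = 1}"

definition torus_top :: "(complex ^ 'n) topology" where
  "torus_top = top_of_set torus"

definition torus_automorphism :: "(complex ^ 'n \<Rightarrow> complex ^ 'n) \<Rightarrow> bool" where
  "torus_automorphism f \<longleftrightarrow>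
     continuous_map torus_top torus_top f \<and>
     bij_betw f torus torus \<and>
     (\<forall>z\<in>torus. \<forall>w\<in>torus. f (z * w) = f z * f w)"

definition quotient_topology :: "'a topology \<Rightarrow> ('a \<Rightarrow> 'b) \<Rightarrow> 'b topology" where
  "quotient_topology X f =
     topology (\<lambda>U. U \<subseteq> f ` topspace X \<and> openin X {x \<in> topspace X. f x \<in> U})"

definition orbit_space :: "('g, 'm) monoid_scheme \<Rightarrow> ('g \<Rightarrow> 'a \<Rightarrow> 'a) \<Rightarrow> 'a topology
                             \<Rightarrow> 'a set topology" where
  "orbit_space G \<phi> X = quotient_topology X (orbit G \<phi>)"

end

theory Submission
  imports Defs
begin

definition ee :: "real^'n \<Rightarrow> complex^'n" where
  "ee t = (\<chi> j. cis (2*pi*(t$j)))"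

definition IntV :: "real^'n \<Rightarrow> bool" where
  "IntV v \<longleftrightarrow> (\<forall>j. v$j \<in> \<int>)"

lemma cis_2pi_eq: "cis (2*pi*a) = cis (2*pi*b) \<longleftrightarrow> a - b \<in> \<int>"
proof -
  have e: "cis (2*pi*a) = cis (2*pi*(a-b)) * cis (2*pi*b)"
    by (simp add: cis_mult algebra_simps)
  have "cis (2*pi*a) = cis (2*pi*b) \<longleftrightarrow> cis (2*pi*(a-b)) = 1"
    by (subst e) (metis cis_neq_zero mult_cancel_right2)
  also have "\<dots> \<longleftrightarrow> a - b \<in> \<int>"
  proof
    assume "cis (2*pi*(a-b)) = 1"
    then have "cos (2*pi*(a-b)) = 1" by (metis cis.sel(1) one_complex.sel(1))
    from cos_one_2pi_int[THEN iffD1, OF this] obtain n::int where "2*pi*(a-b) = real_of_int n * 2 * pi" by blast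
    then have "a - b = n" by simp
    then show "a - b \<in> \<int>" by simp
  next
    assume "a - b \<in> \<int>" then show "cis (2*pi*(a-b)) = 1" by (rule cis_multiple_2pi)
  qed
  finally show ?thesis .
qed

lemma ee_torus[simp]: "ee t \<in> torus"
  by (simp add: ee_def torus_def)

lemma ee_add: "ee (s + t) = ee s * ee t"
  by (simp add: ee_def vec_eq_iff vector_mult_component cis_mult algebra_simps)

lemma ee_zero: "ee 0 = 1"
  by (simp add: ee_def vec_eq_iff)

lemma ee_eq_iff: "ee s = ee t \<longleftrightarrow> IntV (s - t)"
  by (simp add: ee_def vec_eq_iff IntV_def cis_2pi_eq)

lemma cont_ee: "continuous_on S ee"
  unfolding ee_def
  by (intro continuous_on_vec_lambda continuous_on_cis continuous_intros)

lemma ee_surj: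
  fixes z :: "complex^'n"
  assumes "z \<in> torus"
  shows "\<exists>t \<in> cbox 0 (1::real^'n). ee t = z"
proof -
  define t :: "real^'n" where "t = (\<chi> j. frac (Im (Ln (z$j)) / (2*pi)))"
  have "ee t $ j = z $ j" for j
  proof -
    have n: "cmod (z$j) = 1" using assms by (simp add: torus_def)
    then have "z$j \<noteq> 0" by auto
    then have "Re (Ln (z$j)) = 0" using n by (simp add: Re_Ln)
    then have "Ln (z$j) = \<i> * Im (Ln (z$j))" by (metis add_0 complex_eq of_real_0)
    then have zj: "z$j = cis (Im (Ln (z$j)))"
      using \<open>z$j \<noteq> 0\<close> by (metis cis_conv_exp exp_Ln)
    have "cis (2*pi*(t$j)) = cis (2*pi*(Im (Ln (z$j)) / (2*pi)))"
      unfolding cis_2pi_eq t_def by (simp add: frac_def)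
    also have "\<dots> = z$j" using zj by simp
    finally show ?thesis by (simp add: ee_def)
  qed
  moreover have "t \<in> cbox 0 (1::real^'n)"
    by (simp add: t_def mem_box_cart frac_ge_0 less_imp_le[OF frac_lt_1])
  ultimately show ?thesis by (auto simp: vec_eq_iff)
qed

lemma IntV_diff: "IntV a \<Longrightarrow> IntV b \<Longrightarrow> IntV (a - b)"
  by (simp add: IntV_def)
lemma IntV_add: "IntV a \<Longrightarrow> IntV b \<Longrightarrow> IntV (a + b)"
  by (simp add: IntV_def)
lemma IntV_0[simp]: "IntV 0" by (simp add: IntV_def)
lemma IntV_axis[simp]: "IntV (axis i 1)" by (simp add: IntV_def axis_def)

lemma int_valued_const:
  fixes f :: "'a::topological_space \<Rightarrow> real"
  assumes "connected S" "continuous_on S f" "\<And>x. x \<in> S \<Longrightarrow> f x \<in> \<int>"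
  shows "\<exists>c. \<forall>x\<in>S. f x = c"
proof -
  have "f constant_on S"
  proof (rule continuous_discrete_range_constant[OF assms(1,2)])
    fix x assume x: "x \<in> S"
    show "\<exists>e>0. \<forall>y. y \<in> S \<and> f y \<noteq> f x \<longrightarrow> e \<le> norm (f y - f x)"
    proof (intro exI[of _ 1] conjI allI impI)
      fix y assume y: "y \<in> S \<and> f y \<noteq> f x"
      then have "f y - f x \<in> \<int>" "f y - f x \<noteq> 0" using assms(3) x by auto
      then show "1 \<le> norm (f y - f x)"
        by (metis Ints_cases of_int_0 real_norm_def of_int_abs of_int_le_iff zero_less_abs_iff int_one_le_iff_zero_less of_int_1)
    qed simp
  qed
  then show ?thesis by (auto simp: constant_on_def)
qed

lemma lift_torus:
  fixes f :: "'a::real_normed_vector \<Rightarrow> complex^'n"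
  assumes "continuous_on UNIV f" "\<And>t. f t \<in> torus"
  shows "\<exists>\<Theta>. continuous_on UNIV \<Theta> \<and> (\<forall>t. f t = ee (\<Theta> t))"
proof -
  have "\<forall>j::'n. \<exists>L::'a\<Rightarrow>complex. continuous_on UNIV L \<and> (\<forall>t. f t $ j = exp (L t))"
  proof
    fix j
    have c: "continuous_on UNIV (\<lambda>t. f t $ j)"
      using assms(1) by (intro continuous_intros)
    have nz: "f t $ j \<noteq> 0" for t using assms(2)[of t] unfolding torus_def
      by (metis (mono_tags) mem_Collect_eq norm_zero zero_neq_one)
    obtain L where "continuous_on UNIV L" "\<And>t. t \<in> UNIV \<Longrightarrow> f t $ j = exp (L t)"
      using continuous_logarithm_on_simply_connected[OF c
          convex_imp_simply_connected[OF convex_UNIV] locally_path_connected_UNIV] nz by metis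
    then show "\<exists>L. continuous_on UNIV L \<and> (\<forall>t. f t $ j = exp (L t))" by blast
  qed
  then obtain L where L: "\<And>j. continuous_on UNIV (L j)" "\<And>j t. f t $ j = exp (L j t)"
    by metis
  define \<Theta> :: "'a \<Rightarrow> real^'n" where "\<Theta> t = (\<chi> j. Im (L j t) / (2*pi))" for t
  have "continuous_on UNIV \<Theta>"
    unfolding \<Theta>_def by (intro continuous_on_vec_lambda continuous_intros L) auto
  moreover have "f t = ee (\<Theta> t)" for t
  proof -
    have "f t $ j = ee (\<Theta> t) $ j" for j
    proof -
      have "cmod (f t $ j) = 1" using assms(2)[of t] by (simp add: torus_def)
      then have "Re (L j t) = 0" using L(2)[where j=j and t=t] by simp
      then have "L j t = \<i> * Im (L j t)" by (simp add: complex_eq_iff)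
      then show ?thesis using L(2)[where j=j and t=t]
        by (simp add: \<Theta>_def ee_def cis_conv_exp)
    qed
    then show ?thesis by (simp add: vec_eq_iff)
  qed
  ultimately show ?thesis by blast
qed

lemma ee_eq_const:
  fixes a b :: "'a::topological_space \<Rightarrow> real^'n"
  assumes "connected S" "continuous_on S a" "continuous_on S b"
    "\<And>x. x \<in> S \<Longrightarrow> ee (a x) = ee (b x)" "x0 \<in> S"
  shows "IntV (a x0 - b x0) \<and> (\<forall>x\<in>S. a x = b x + (a x0 - b x0))"
proof -
  have "\<exists>c. \<forall>x\<in>S. (a x - b x) $ j = c" for j
    apply (rule int_valued_const[OF assms(1)])
     apply (intro continuous_intros assms(2,3))
    using assms(4) by (auto simp: ee_eq_iff IntV_def)
  then have "(a x - b x) $ j = (a x0 - b x0) $ j" if "x \<in> S" for x j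
    using that assms(5) by metis
  moreover have "IntV (a x0 - b x0)" using assms(4)[OF assms(5)] by (simp only: ee_eq_iff)
  ultimately show ?thesis
    by (auto simp: vec_eq_iff algebra_simps)
qed

lemma per_int_axis:
  fixes D :: "real^'n \<Rightarrow> 'b::real_vector"
  assumes "\<And>t. D (t + axis i 1) = D t + a"
  shows "D (t + of_int k *\<^sub>R axis i 1) = D t + of_int k *\<^sub>R a"
proof -
  have nat: "D (t + real n *\<^sub>R axis i 1) = D t + real n *\<^sub>R a" for n t
  proof (induction n arbitrary: t)
    case 0 then show ?case by simp
  next
    case (Suc n)
    have "D (t + real (Suc n) *\<^sub>R axis i 1) = D ((t + real n *\<^sub>R axis i 1) + axis i 1)"
      by (simp add: algebra_simps)
    also have "\<dots> = D (t + real n *\<^sub>R axis i 1) + a" by (rule assms)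
    also have "\<dots> = D t + real (Suc n) *\<^sub>R a" by (simp add: Suc.IH algebra_simps)
    finally show ?case .
  qed
  show ?thesis
  proof (cases "k \<ge> 0")
    case True
    then show ?thesis using nat[of t "nat k"] by simp
  next
    case False
    define n where "n = nat (-k)"
    have k: "of_int k = - real n" using False by (simp add: n_def)
    have "D ((t - real n *\<^sub>R axis i 1) + real n *\<^sub>R axis i 1) = D (t - real n *\<^sub>R axis i 1) + real n *\<^sub>R a"
      by (rule nat)
    then show ?thesis by (simp add: k algebra_simps)
  qed
qed

lemma per_intv:
  fixes D :: "real^'n \<Rightarrow> 'b::real_vector"
  assumes "\<And>t i. D (t + axis i 1) = D t + a i" "IntV v"
  shows "D (t + v) = D t + (\<Sum>i\<in>UNIV. v$i *\<^sub>R a i)"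
proof -
  have S: "D (t + (\<Sum>i\<in>S. v$i *\<^sub>R axis i 1)) = D t + (\<Sum>i\<in>S. v$i *\<^sub>R a i)" if "finite S" for S
    using that
  proof (induction S arbitrary: t rule: finite_induct)
    case empty then show ?case by simp
  next
    case (insert i S)
    obtain k where k: "v$i = of_int k" using assms(2) by (metis IntV_def Ints_cases)
    have e: "D (t + v$i *\<^sub>R axis i 1) = D t + v$i *\<^sub>R a i"
      unfolding k by (rule per_int_axis) (rule assms(1))
    have "D (t + (\<Sum>j\<in>insert i S. v$j *\<^sub>R axis j 1)) = D ((t + v$i *\<^sub>R axis i 1) + (\<Sum>j\<in>S. v$j *\<^sub>R axis j 1))"
      using insert by (simp add: algebra_simps)
    also have "\<dots> = D (t + v$i *\<^sub>R axis i 1) + (\<Sum>j\<in>S. v$j *\<^sub>R a j)" by (rule insert.IH)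
    also have "\<dots> = D t + (\<Sum>j\<in>insert i S. v$j *\<^sub>R a j)"
      using insert e by (simp add: algebra_simps)
    finally show ?case .
  qed
  have "(\<Sum>i\<in>UNIV. v$i *\<^sub>R axis i 1) = v"
    using basis_expansion[of v] by (simp only: scalar_mult_eq_scaleR)
  then show ?thesis using S[of UNIV] by simp
qed

lemma per_intv0:
  fixes D :: "real^'n \<Rightarrow> 'b::real_vector"
  assumes "\<And>t i. D (t + axis i 1) = D t" "IntV v"
  shows "D (t + v) = D t"
  using per_intv[of D "\<lambda>i. 0" v t] assms by simp

lemma floor_decomp:
  fixes t :: "real^'n"
  shows "\<exists>s v. s \<in> cbox 0 1 \<and> IntV v \<and> t = s + v"
proof -
  define v :: "real^'n" where "v = (\<chi> j. of_int \<lfloor>t$j\<rfloor>)"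
  have "t - v \<in> cbox 0 1"
    by (auto simp: v_def mem_box_cart frac_def[symmetric] frac_ge_0 less_imp_le[OF frac_lt_1])
  moreover have "IntV v" by (simp add: v_def IntV_def)
  ultimately show ?thesis by (metis diff_add_cancel)
qed

lemma periodic_bounded:
  fixes u :: "real^'n \<Rightarrow> 'b::real_normed_vector"
  assumes "continuous_on UNIV u" "\<And>t i. u (t + axis i 1) = u t"
  shows "\<exists>B. \<forall>t. norm (u t) \<le> B"
proof -
  have "compact (u ` cbox 0 1)"
    by (rule compact_continuous_image) (auto intro: continuous_on_subset[OF assms(1)])
  then obtain B where B: "\<And>x. x \<in> u ` cbox 0 1 \<Longrightarrow> norm x \<le> B"
    by (meson bounded_iff compact_imp_bounded)
  have "norm (u t) \<le> B" for t
  proof -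
    obtain s v where sv: "s \<in> cbox 0 1" "IntV v" "t = s + v" using floor_decomp by blast
    then have "u t = u s" using per_intv0[OF assms(2) sv(2)] by simp
    then show ?thesis using B sv(1) by auto
  qed
  then show ?thesis by blast
qed

lemma bounded_mult_zero:
  fixes c :: real
  assumes "\<And>n::nat. real n * c \<le> B"
  shows "c \<le> 0"
proof (rule ccontr)
  assume "\<not> c \<le> 0"
  then have "0 < c" by simp
  then obtain n where "B < real n * c" using ex_less_of_nat_mult[of c B] by blast
  with assms[of n] show False by simp
qed

lemma bounded_mult_zero':
  fixes c :: real
  assumes "\<And>n::nat. \<bar>real n * c\<bar> \<le> B"
  shows "c = 0"
proof -
  have "real n * c \<le> B" for n using assms[of n] by (simp add: abs_le_iff)
  then have "c \<le> 0" by (rule bounded_mult_zero)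
  moreover have "real n * (-c) \<le> B" for n using assms[of n] by (simp add: abs_le_iff)
  then have "-c \<le> 0" by (rule bounded_mult_zero)
  ultimately show ?thesis by simp
qed

lemma istopology_quot:
  "istopology (\<lambda>U. U \<subseteq> f ` topspace X \<and> openin X {x \<in> topspace X. f x \<in> U})"
  (is "istopology ?L")
proof -
  have 1: "?L (S \<inter> T)" if "?L S" "?L T" for S T
  proof -
    have "{x \<in> topspace X. f x \<in> S \<inter> T} = {x \<in> topspace X. f x \<in> S} \<inter> {x \<in> topspace X. f x \<in> T}"
      by auto
    then show ?thesis using that by (auto intro!: openin_Int)
  qed
  have 2: "?L (\<Union>K)" if K: "\<forall>U\<in>K. ?L U" for K
  proof -
    have "{x \<in> topspace X. f x \<in> \<Union>K} = \<Union>((\<lambda>U. {x \<in> topspace X. f x \<in> U}) ` K)" by auto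
    moreover have "openin X (\<Union>((\<lambda>U. {x \<in> topspace X. f x \<in> U}) ` K))"
      using K by (intro openin_Union) auto
    ultimately show ?thesis using K by auto
  qed
  show ?thesis unfolding istopology_def
  proof (rule conjI; intro allI impI)
    fix S T assume "?L S" "?L T" then show "?L (S \<inter> T)" by (rule 1)
  next
    fix K assume "\<forall>U\<in>K. ?L U" then show "?L (\<Union>K)" by (rule 2)
  qed
qed

lemma openin_quot:
  "openin (quotient_topology X f) U \<longleftrightarrow> U \<subseteq> f ` topspace X \<and> openin X {x \<in> topspace X. f x \<in> U}"
  unfolding quotient_topology_def by (simp add: istopology_quot)

lemma topspace_quot: "topspace (quotient_topology X f) = f ` topspace X"
proof -
  have "openin (quotient_topology X f) (f ` topspace X)"
  proof -
    have "{x \<in> topspace X. f x \<in> f ` topspace X} = topspace X" by auto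
    then show ?thesis unfolding openin_quot by simp
  qed
  then have "f ` topspace X \<subseteq> topspace (quotient_topology X f)" by (rule openin_subset)
  moreover have "topspace (quotient_topology X f) \<subseteq> f ` topspace X"
    using openin_quot[of X f "topspace (quotient_topology X f)"] by auto
  ultimately show ?thesis by blast
qed

lemma cont_quot: "continuous_map X (quotient_topology X f) f"
  unfolding continuous_map_def openin_quot topspace_quot by auto

lemma ee_axis[simp]: "ee (axis i 1) = 1"
  by (simp add: ee_def vec_eq_iff axis_def cis_2pi)

lemma ee_shift: "ee (t + axis i 1) = ee t"
  by (simp add: ee_add)

lemma deg_lift:
  fixes \<Phi> :: "complex^'n \<Rightarrow> complex^'n"
  assumes "continuous_on torus \<Phi>" "\<Phi> ` torus \<subseteq> torus"
  shows "\<exists>\<Lambda> M. continuous_on UNIV \<Lambda> \<and> (\<forall>t. \<Phi> (ee t) = ee (\<Lambda> t)) \<and> (\<forall>i. IntV (M i))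
            \<and> (\<forall>t i. \<Lambda> (t + axis i 1) = \<Lambda> t + M i)"
proof -
  have c: "continuous_on UNIV (\<lambda>t. \<Phi> (ee t))"
    by (rule continuous_on_compose2[OF assms(1) cont_ee]) auto
  have "\<Phi> (ee t) \<in> torus" for t using assms(2) by auto
  then obtain \<Lambda> where L: "continuous_on UNIV \<Lambda>" "\<And>t. \<Phi> (ee t) = ee (\<Lambda> t)"
    using lift_torus[OF c] by blast
  define M where "M i = \<Lambda> (0 + axis i 1) - \<Lambda> 0" for i
  have "IntV (M i) \<and> (\<forall>t. \<Lambda> (t + axis i 1) = \<Lambda> t + M i)" for i
  proof -
    have "IntV ((\<lambda>t. \<Lambda> (t + axis i 1)) 0 - \<Lambda> 0) \<and>
          (\<forall>t\<in>UNIV. \<Lambda> (t + axis i 1) = \<Lambda> t + ((\<lambda>t. \<Lambda> (t + axis i 1)) 0 - \<Lambda> 0))"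
    proof (rule ee_eq_const[where a="\<lambda>t. \<Lambda> (t + axis i 1)" and b=\<Lambda>])
      show "continuous_on UNIV (\<lambda>t. \<Lambda> (t + axis i 1))"
        by (rule continuous_on_compose2[OF L(1)]) (auto intro: continuous_intros)
      show "ee (\<Lambda> (t + axis i 1)) = ee (\<Lambda> t)" if "t \<in> UNIV" for t
        using L(2)[of t] L(2)[of "t + axis i 1"] by (simp add: ee_shift)
    qed (auto simp: L(1))
    then show ?thesis by (simp add: M_def)
  qed
  then show ?thesis using L by blast
qed

lemma aut_trivial:
  fixes \<phi> :: "complex^'n \<Rightarrow> complex^'n" and B :: "real^'n \<Rightarrow> real^'n"
  assumes hom: "\<forall>z\<in>torus. \<forall>w\<in>torus. \<phi> (z * w) = \<phi> z * \<phi> w"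
    and im: "\<phi> ` torus \<subseteq> torus"
    and cB: "continuous_on UNIV B" and lB: "\<And>t. \<phi> (ee t) = ee (B t)"
    and dB: "\<And>t j. B (t + axis j 1) = B t + axis j 1"
  shows "\<forall>x\<in>torus. \<phi> x = x"
proof -
  have one: "(1::complex^'n) \<in> torus" using ee_torus[of 0] by (simp add: ee_zero)
  have p1: "\<phi> 1 = 1"
  proof -
    have pp: "\<phi> 1 = \<phi> 1 * \<phi> 1" using hom one by (metis mult_1)
    have "\<phi> 1 \<in> torus" using im one by auto
    then have "(\<phi> 1) $ j \<noteq> 0" for j unfolding torus_def
      by (metis (mono_tags) mem_Collect_eq norm_zero zero_neq_one)
    moreover have "(\<phi> 1) $ j = (\<phi> 1) $ j * (\<phi> 1) $ j" for j
      using pp by (metis vector_mult_component)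
    ultimately have "(\<phi> 1) $ j = 1" for j by (metis mult_cancel_left1)
    then show ?thesis by (simp add: vec_eq_iff)
  qed
  have add: "ee (B (s + t)) = ee (B s + B t)" for s t
  proof -
    have "ee (B (s + t)) = \<phi> (ee s * ee t)" using lB[of "s+t"] by (simp add: ee_add)
    also have "\<dots> = \<phi> (ee s) * \<phi> (ee t)" using hom by simp
    also have "\<dots> = ee (B s + B t)" using lB[of s] lB[of t] by (simp add: ee_add)
    finally show ?thesis .
  qed
  define a :: "(real^'n) \<times> (real^'n) \<Rightarrow> real^'n" where "a p = B (fst p + snd p)" for p
  define b :: "(real^'n) \<times> (real^'n) \<Rightarrow> real^'n" where "b p = B (fst p) + B (snd p)" for p
  define p0 :: "(real^'n) \<times> (real^'n)" where "p0 = (0, 0)"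
  have "IntV (a p0 - b p0) \<and> (\<forall>p\<in>UNIV. a p = b p + (a p0 - b p0))"
  proof (rule ee_eq_const)
    have "continuous_on UNIV (\<lambda>p::(real^'n) \<times> (real^'n). fst p + snd p)"
      by (intro continuous_on_add continuous_on_fst continuous_on_snd continuous_on_id)
    then show "continuous_on UNIV a" unfolding a_def
      by (rule continuous_on_compose2[OF cB]) auto
    show "continuous_on UNIV b" unfolding b_def
      by (intro continuous_intros continuous_on_compose2[OF cB]) auto
  qed (auto simp: add a_def b_def)
  then have "a (s, t) = b (s, t) + (a p0 - b p0)" for s t by blast
  then have Badd: "B (s + t) = B s + B t - B 0" for s t
    by (auto simp: a_def b_def p0_def algebra_simps)
  define R where "R t = B t - B 0 - t" for t
  have Radd: "R (s + t) = R s + R t" for s t by (simp add: R_def Badd algebra_simps)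
  have Rper: "R (t + axis i 1) = R t" for t i by (simp add: R_def dB algebra_simps)
  have cR: "continuous_on UNIV R" unfolding R_def by (intro continuous_intros cB)
  obtain Bd where Bd: "\<And>t. norm (R t) \<le> Bd" using periodic_bounded[OF cR Rper] by blast
  have Rn: "R (real n *\<^sub>R t) = real n *\<^sub>R R t" for n t
  proof (induction n)
    case 0
    have "R 0 = R 0 + R 0" using Radd[of 0 0] by simp
    then show ?case by simp
  next
    case (Suc n)
    have "R (real (Suc n) *\<^sub>R t) = R (real n *\<^sub>R t + t)" by (simp add: algebra_simps)
    also have "\<dots> = real (Suc n) *\<^sub>R R t" by (simp add: Radd Suc.IH algebra_simps)
    finally show ?case .
  qed
  have R0: "R t = 0" for t
  proof -
    have "\<bar>real n * norm (R t)\<bar> \<le> Bd" for n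
      using Bd[of "real n *\<^sub>R t"] by (simp add: Rn)
    then have "norm (R t) = 0" by (rule bounded_mult_zero')
    then show ?thesis by simp
  qed
  have "\<phi> (ee t) = ee t" for t
  proof -
    have "B t = t + B 0" using R0[of t] by (simp add: R_def algebra_simps)
    then have "\<phi> (ee t) = ee t * ee (B 0)" by (simp add: lB ee_add)
    also have "ee (B 0) = 1" using lB[of 0] p1 by (simp add: ee_zero)
    finally show ?thesis by simp
  qed
  then show ?thesis using ee_surj by blast
qed

lemma Ints_floor_eq: "(x::real) \<in> \<int> \<Longrightarrow> real_of_int \<lfloor>x\<rfloor> = x"
  by (metis Ints_cases floor_of_int)

lemma rat_scale_int:
  fixes x :: "rat^'n"
  shows "\<exists>D::int. D \<noteq> 0 \<and> (\<forall>j. \<exists>n::int. x$j * of_int D = of_int n)"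
proof -
  define d where "d j = snd (quotient_of (x$j))" for j
  define D where "D = (\<Prod>j\<in>UNIV. d j)"
  have dpos: "0 < d j" for j by (simp add: d_def quotient_of_denom_pos')
  then have "D \<noteq> 0" by (simp add: D_def) (metis order_less_irrefl)
  moreover have "\<exists>n::int. x$j * of_int D = of_int n" for j
  proof -
    have xj: "x$j = of_int (fst (quotient_of (x$j))) / of_int (d j)"
      by (simp add: d_def quotient_of_div)
    have "D = d j * (\<Prod>k\<in>UNIV - {j}. d k)"
      unfolding D_def by (simp add: prod.remove)
    then have "x$j * of_int D = of_int (fst (quotient_of (x$j)) * (\<Prod>k\<in>UNIV - {j}. d k))"
      using dpos[of j] by (subst xj) (simp add: field_simps)
    then show ?thesis by blast
  qed
  ultimately show ?thesis by blast
qed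

lemma int_cokernel:
  fixes M :: "'n \<Rightarrow> real^'n" and w :: "real^'n"
  assumes MI: "\<And>i. IntV (M i)" and wI: "IntV w" and w0: "w \<noteq> 0"
    and ker: "(\<Sum>i\<in>UNIV. w$i *\<^sub>R M i) = 0"
  shows "\<exists>m. IntV m \<and> m \<noteq> 0 \<and> (\<forall>i. m \<bullet> M i = 0)"
proof -
  define Mi where "Mi j i = \<lfloor>M i $ j\<rfloor>" for j i
  define wi where "wi i = \<lfloor>w $ i\<rfloor>" for i
  have Mr: "M i $ j = of_int (Mi j i)" for i j
    using MI[of i] by (simp add: Mi_def IntV_def Ints_floor_eq)
  have wr: "w $ i = of_int (wi i)" for i
    using wI by (simp add: wi_def IntV_def Ints_floor_eq)
  define A :: "rat^'n^'n" where "A = (\<chi> j i. of_int (Mi j i))"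
  define wq :: "rat^'n" where "wq = (\<chi> i. of_int (wi i))"
  have isum: "(\<Sum>i\<in>UNIV. Mi j i * wi i) = 0" for j
  proof -
    have "0 = (\<Sum>i\<in>UNIV. w$i *\<^sub>R M i) $ j" using ker by simp
    also have "\<dots> = real_of_int (\<Sum>i\<in>UNIV. Mi j i * wi i)"
      by (simp add: sum_component Mr wr mult.commute)
    finally show ?thesis by linarith
  qed
  have "A *v wq = 0"
  proof -
    have "(A *v wq) $ j = of_int (\<Sum>i\<in>UNIV. Mi j i * wi i)" for j
      by (simp add: A_def wq_def matrix_vector_mult_def)
    then show ?thesis by (simp add: vec_eq_iff isum)
  qed
  moreover have "wq \<noteq> 0"
  proof
    assume "wq = 0"
    then have "wi i = 0" for i by (simp add: wq_def vec_eq_iff)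
    then have "w = 0" by (simp add: vec_eq_iff wr)
    with w0 show False by simp
  qed
  ultimately have "\<not> inj ((*v) A)" unfolding inj_def by (metis matrix_vector_mult_0_right)
  then have "\<not> (\<exists>B. B ** A = mat 1)"
    using matrix_left_invertible_injective[of A] by blast
  then have "\<not> invertible A" using invertible_left_inverse by blast
  then have "det A = 0" using invertible_det_nz by blast
  then have "det (transpose A) = 0" by (simp add: det_transpose)
  then have "\<not> invertible (transpose A)" using invertible_det_nz by blast
  then have "\<not> (\<exists>B. B ** transpose A = mat 1)" using invertible_left_inverse by blast
  then have "\<not> inj ((*v) (transpose A))"
    using matrix_left_invertible_injective[of "transpose A"] by blast
  then obtain y z where "transpose A *v y = transpose A *v z" "y \<noteq> z" unfolding inj_def by blast
  then have x: "transpose A *v (y - z) = 0" "y - z \<noteq> 0"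
    by (simp_all add: matrix_vector_mult_diff_distrib)
  define x where "x = y - z"
  note x = x[folded x_def]
  obtain D where D: "D \<noteq> 0" "\<And>j. \<exists>n::int. x$j * of_int D = of_int n"
    using rat_scale_int[of x] by blast
  then obtain mi where mi: "\<And>j. x$j * of_int D = of_int (mi j)" by metis
  define m :: "real^'n" where "m = (\<chi> j. of_int (mi j))"
  have "IntV m" by (simp add: m_def IntV_def)
  moreover have "m \<noteq> 0"
  proof
    assume "m = 0"
    then have "mi j = 0" for j by (simp add: m_def vec_eq_iff)
    then have "x$j = 0" for j using mi[of j] D(1) by simp
    with x(2) show False by (simp add: vec_eq_iff)
  qed
  moreover have "m \<bullet> M i = 0" for i
  proof -
    have "0 = (transpose A *v x) $ i * of_int D" using x(1) by simp
    also have "\<dots> = (\<Sum>j\<in>UNIV. of_int (Mi j i) * (x$j * of_int D))"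
      by (simp add: matrix_vector_mult_def transpose_def A_def sum_distrib_right mult.assoc)
    also have "\<dots> = of_int (\<Sum>j\<in>UNIV. Mi j i * mi j)" by (simp add: mi)
    finally have "(\<Sum>j\<in>UNIV. Mi j i * mi j) = 0" by (metis of_int_0 of_int_eq_iff)
    moreover have "m \<bullet> M i = real_of_int (\<Sum>j\<in>UNIV. Mi j i * mi j)"
      by (simp add: inner_vec_def m_def Mr mult.commute)
    ultimately show ?thesis by simp
  qed
  ultimately show ?thesis by blast
qed

lemma orbit_in:
  assumes "group_action G E \<phi>" "x \<in> E" "y \<in> orbit G \<phi> x"
  shows "y \<in> E"
  using assms group_action.element_image[OF assms(1)] by (auto simp: orbit_def)

lemma orbit_eq:
  assumes GA: "group_action G E \<phi>" and x: "x \<in> E" and g: "g \<in> carrier G"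
  shows "orbit G \<phi> (\<phi> g x) = orbit G \<phi> x"
proof -
  have gx: "\<phi> g x \<in> E" using group_action.element_image[OF GA g x] by simp
  have gxo: "\<phi> g x \<in> orbit G \<phi> x" using g by (auto simp: orbit_def)
  show ?thesis
  proof
    show "orbit G \<phi> (\<phi> g x) \<subseteq> orbit G \<phi> x"
    proof
      fix y assume y: "y \<in> orbit G \<phi> (\<phi> g x)"
      then have "y \<in> E" using orbit_in[OF GA gx] by blast
      then show "y \<in> orbit G \<phi> x"
        using group_action.orbit_trans[OF GA x gx _ gxo y] by blast
    qed
  next
    show "orbit G \<phi> x \<subseteq> orbit G \<phi> (\<phi> g x)"
    proof
      fix y assume y: "y \<in> orbit G \<phi> x"
      then have yE: "y \<in> E" using orbit_in[OF GA x] by blast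
      have "x \<in> orbit G \<phi> (\<phi> g x)" using group_action.orbit_sym[OF GA x gx gxo] .
      then show "y \<in> orbit G \<phi> (\<phi> g x)"
        using group_action.orbit_trans[OF GA gx x yE _ y] by blast
    qed
  qed
qed

lemma orbit_rel:
  assumes GA: "group_action G E \<phi>" and "x \<in> E" "y \<in> E" "orbit G \<phi> y = orbit G \<phi> x"
  shows "\<exists>g\<in>carrier G. y = \<phi> g x"
proof -
  have "y \<in> orbit G \<phi> y" using group_action.orbit_refl[OF GA assms(3)] .
  then have "y \<in> orbit G \<phi> x" using assms(4) by simp
  then show ?thesis by (auto simp: orbit_def)
qed

lemma cis_sum: "finite A \<Longrightarrow> (\<Prod>j\<in>A. cis (f j)) = cis (\<Sum>j\<in>A. f j)"
  by (induction A rule: finite_induct) (auto simp: cis_mult)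

lemma topspace_torus[simp]: "topspace torus_top = torus"
  by (simp add: torus_top_def)

theorem lemma2p2:
  fixes F (structure)
    and \<phi> :: "'g \<Rightarrow> complex ^ 'n \<Rightarrow> complex ^ 'n"
  assumes "group F"
    and "finite (carrier F)"
    and "group_action F torus \<phi>"
    and "\<forall>g \<in> carrier F. torus_automorphism (\<phi> g)"
    and "orbit_space F \<phi> torus_top homeomorphic_space (torus_top :: (complex ^ 'n) topology)"
  shows "\<forall>g \<in> carrier F. \<forall>x \<in> torus. \<phi> g x = x"
proof -
  note GA = assms(3)
  define Y where "Y = orbit_space F \<phi> torus_top"
  define q where "q = orbit F \<phi>"
  obtain h k where hk: "homeomorphic_maps Y (torus_top :: (complex^'n) topology) h k"
    using assms(5) unfolding homeomorphic_space_def Y_def by blast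
  have topY: "topspace Y = q ` torus"
    by (simp add: Y_def q_def orbit_space_def topspace_quot)
  have openY: "openin Y V \<longleftrightarrow> V \<subseteq> q ` torus \<and> openin torus_top {x \<in> torus. q x \<in> V}" for V
    by (simp add: Y_def q_def orbit_space_def openin_quot)
  have cq: "continuous_map torus_top Y q"
    using cont_quot[of torus_top q] by (simp add: Y_def q_def orbit_space_def)
  have ch: "continuous_map Y torus_top h" and ck: "continuous_map torus_top Y k"
    and kh: "\<And>y. y \<in> topspace Y \<Longrightarrow> k (h y) = y" and hk': "\<And>z. z \<in> torus \<Longrightarrow> h (k z) = z"
    using hk by (auto simp: homeomorphic_maps_def)
  define \<Phi> where "\<Phi> x = h (q x)" for x
  have "continuous_map torus_top torus_top \<Phi>"
    unfolding \<Phi>_def using continuous_map_compose[OF cq ch] by (simp add: o_def)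
  then have cPhi: "continuous_on torus \<Phi>" and iPhi: "\<Phi> ` torus \<subseteq> torus"
    by (auto simp: torus_top_def continuous_map_subtopology_eu)
  obtain \<Lambda> M where cL: "continuous_on UNIV \<Lambda>" and eL: "\<And>t. \<Phi> (ee t) = ee (\<Lambda> t)"
    and MI: "\<And>i. IntV (M i)" and dL: "\<And>t i. \<Lambda> (t + axis i 1) = \<Lambda> t + M i"
    using deg_lift[OF cPhi iPhi] by blast
  have qinv: "q (\<phi> g x) = q x" if "g \<in> carrier F" "x \<in> torus" for g x
    using orbit_eq[OF GA that(2,1)] by (simp add: q_def)
  have gaut: "continuous_on torus (\<phi> g) \<and> \<phi> g ` torus \<subseteq> torus \<and>
      (\<forall>z\<in>torus. \<forall>w\<in>torus. \<phi> g (z * w) = \<phi> g z * \<phi> g w)" if "g \<in> carrier F" for g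
    using assms(4) that
    by (auto simp: torus_automorphism_def torus_top_def continuous_map_subtopology_eu)
  have glift: "\<exists>B C. continuous_on UNIV B \<and> (\<forall>t. \<phi> g (ee t) = ee (B t)) \<and> (\<forall>j. IntV (C j))
            \<and> (\<forall>t j. B (t + axis j 1) = B t + C j)" if "g \<in> carrier F" for g
    using deg_lift[of "\<phi> g"] gaut[OF that] by blast
  have LB: "\<exists>d. \<forall>t. \<Lambda> (B t) = \<Lambda> t + d"
    if g: "g \<in> carrier F" and cB: "continuous_on UNIV B" and eB: "\<And>t. \<phi> g (ee t) = ee (B t)" for g B
  proof -
    have "IntV ((\<lambda>t. \<Lambda> (B t)) 0 - \<Lambda> 0) \<and> (\<forall>t\<in>UNIV. \<Lambda> (B t) = \<Lambda> t + ((\<lambda>t. \<Lambda> (B t)) 0 - \<Lambda> 0))"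
    proof (rule ee_eq_const[where a="\<lambda>t. \<Lambda> (B t)" and b=\<Lambda>])
      show "continuous_on UNIV (\<lambda>t. \<Lambda> (B t))"
        by (rule continuous_on_compose2[OF cL cB]) auto
      show "ee (\<Lambda> (B t)) = ee (\<Lambda> t)" if "t \<in> UNIV" for t
      proof -
        have "ee (\<Lambda> (B t)) = \<Phi> (\<phi> g (ee t))" by (simp add: eL eB)
        also have "\<dots> = \<Phi> (ee t)" by (simp add: \<Phi>_def qinv[OF g])
        finally show ?thesis by (simp add: eL)
      qed
    qed (auto simp: cL)
    then show ?thesis by blast
  qed
  have Lv: "\<Lambda> (t + v) = \<Lambda> t + (\<Sum>i\<in>UNIV. v$i *\<^sub>R M i)" if "IntV v" for t v
    using per_intv[of \<Lambda> M v t] dL that by blast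
  have noker: "w = 0" if wI: "IntV w" and ker: "(\<Sum>i\<in>UNIV. w$i *\<^sub>R M i) = 0" for w
  proof (rule ccontr)
    assume w0: "w \<noteq> 0"
    obtain m where mI: "IntV m" and m0: "m \<noteq> 0" and mM: "\<And>i. m \<bullet> M i = 0"
      using int_cokernel[OF MI wI w0 ker] by blast
    define u where "u t = m \<bullet> \<Lambda> t" for t
    have cu: "continuous_on UNIV u" unfolding u_def by (intro continuous_intros cL)
    have uper: "u (t + axis i 1) = u t" for t i by (simp add: u_def dL inner_add_right mM)
    obtain Bu where Bu: "\<And>t. norm (u t) \<le> Bu" using periodic_bounded[OF cu uper] by blast
    have uint: "u (t + v) = u t" if "IntV v" for t v using per_intv0[OF uper that] .
    have uinv: "u (B t) = u t"
      if g: "g \<in> carrier F" and cB: "continuous_on UNIV B" and eB: "\<And>t. \<phi> g (ee t) = ee (B t)" for g B t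
    proof -
      obtain d where d: "\<And>t. \<Lambda> (B t) = \<Lambda> t + d" using LB[OF g cB eB] by blast
      define c where "c = m \<bullet> d"
      have ub: "u (B t) = u t + c" for t by (simp add: u_def d c_def inner_add_right)
      have "u ((B ^^ n) t) = u t + real n * c" for n
        by (induction n) (auto simp: ub algebra_simps)
      then have "\<bar>real n * c\<bar> \<le> 2 * Bu" for n
        using Bu[of "(B ^^ n) t"] Bu[of t] by (auto simp: abs_le_iff)
      then have "c = 0" by (rule bounded_mult_zero')
      then show ?thesis by (simp add: ub)
    qed
    have uorb: "u s = u t" if qe: "q (ee s) = q (ee t)" for s t
    proof -
      obtain g where g: "g \<in> carrier F" and gs: "ee s = \<phi> g (ee t)"
        using orbit_rel[OF GA ee_torus ee_torus, of s t] qe by (auto simp: q_def)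
      obtain B C where cB: "continuous_on UNIV B" and eB: "\<And>t. \<phi> g (ee t) = ee (B t)"
        using glift[OF g] by blast
      have "IntV (s - B t)" using gs eB[of t] by (simp add: ee_eq_iff)
      then have "u s = u (B t)" using uint[of "s - B t" "B t"] by simp
      also have "\<dots> = u t" by (rule uinv[OF g cB eB])
      finally show ?thesis .
    qed
    define U where "U y = u (SOME t. y = q (ee t))" for y
    have Uq: "U (q (ee t)) = u t" for t
    proof -
      have "q (ee t) = q (ee (SOME t'. q (ee t) = q (ee t')))"
        by (rule someI[where x=t]) simp
      from uorb[OF this] show ?thesis unfolding U_def by (rule sym)
    qed
    have qtor: "\<exists>t. y = q (ee t)" if "y \<in> topspace Y" for y
    proof -
      have "y \<in> q ` torus" using that topY by simp
      then obtain x where x: "x \<in> torus" "y = q x" by blast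
      obtain t where "ee t = x" using ee_surj[OF x(1)] by blast
      then show ?thesis using x by blast
    qed
    have cU: "continuous_map Y euclideanreal U"
      unfolding continuous_map_def
    proof (intro conjI allI impI)
      show "U \<in> topspace Y \<rightarrow> topspace euclideanreal" by simp
      fix V :: "real set" assume "openin euclideanreal V"
      then have oV: "open V" by simp
      define W where "W = u -` V"
      have oW: "open W" unfolding W_def by (rule open_vimage[OF oV cu])
      have Wi: "t + v \<in> W \<longleftrightarrow> t \<in> W" if "IntV v" for t v
        by (simp add: W_def uint[OF that])
      have seteq: "{x \<in> torus. q x \<in> {y \<in> topspace Y. U y \<in> V}} = ee ` W"
      proof
        show "{x \<in> torus. q x \<in> {y \<in> topspace Y. U y \<in> V}} \<subseteq> ee ` W"
        proof
          fix x assume x: "x \<in> {x \<in> torus. q x \<in> {y \<in> topspace Y. U y \<in> V}}"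
          then obtain t where t: "x = ee t" using ee_surj by blast
          then have "u t \<in> V" using x by (simp add: Uq)
          then show "x \<in> ee ` W" using t by (simp add: W_def)
        qed
      next
        show "ee ` W \<subseteq> {x \<in> torus. q x \<in> {y \<in> topspace Y. U y \<in> V}}"
          by (auto simp: W_def Uq topY)
      qed
      have closedC: "closedin torus_top (ee ` (cbox 0 1 - W))"
      proof -
        have "compact (cbox (0::real^'n) 1 - W)"
          using oW by (simp add: Diff_eq compact_Int_closed closed_Compl)
        then have "compact (ee ` (cbox 0 1 - W))" by (rule compact_continuous_image[OF cont_ee])
        then have "closed (ee ` (cbox 0 1 - W))" by (rule compact_imp_closed)
        then show ?thesis unfolding torus_top_def by (rule closed_subset[rotated]) auto
      qed
      have "ee ` W = torus - ee ` (cbox 0 1 - W)"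
      proof
        show "ee ` W \<subseteq> torus - ee ` (cbox 0 1 - W)"
        proof
          fix x assume "x \<in> ee ` W"
          then obtain t where t: "t \<in> W" "x = ee t" by blast
          have "x \<notin> ee ` (cbox 0 1 - W)"
          proof
            assume "x \<in> ee ` (cbox 0 1 - W)"
            then obtain s where s: "s \<notin> W" "ee s = ee t" using t by blast
            then have "IntV (s - t)" by (simp add: ee_eq_iff)
            then have "t + (s - t) \<in> W \<longleftrightarrow> t \<in> W" by (rule Wi)
            then show False using s t by simp
          qed
          then show "x \<in> torus - ee ` (cbox 0 1 - W)" using t by simp
        qed
      next
        show "torus - ee ` (cbox 0 1 - W) \<subseteq> ee ` W"
        proof
          fix x assume x: "x \<in> torus - ee ` (cbox 0 1 - W)"
          then obtain s where s: "s \<in> cbox 0 1" "ee s = x" using ee_surj by blast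
          then show "x \<in> ee ` W" using x by blast
        qed
      qed
      then have "openin torus_top (ee ` W)"
        using openin_diff[OF openin_topspace closedC] by simp
      then show "openin Y {y \<in> topspace Y. U y \<in> V}"
        unfolding openY using seteq topY by auto
    qed
    define K where "K z = U (k z)" for z
    have cK: "continuous_map torus_top euclideanreal K"
      unfolding K_def using continuous_map_compose[OF ck cU] by (simp add: o_def)
    have cee: "continuous_map euclidean torus_top ee"
      unfolding torus_top_def continuous_map_in_subtopology
      using cont_ee[of UNIV] by (auto simp: continuous_map_iff_continuous2)
    have cKe: "continuous_on UNIV (\<lambda>t. K (ee t))"
      using continuous_map_compose[OF cee cK] by (simp add: o_def continuous_map_iff_continuous2)
    define mi where "mi j = \<lfloor>m $ j\<rfloor>" for j
    have mr: "m $ j = of_int (mi j)" for j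
      using mI by (simp add: mi_def IntV_def Ints_floor_eq)
    define \<chi>m where "\<chi>m z = (\<Prod>j\<in>UNIV. (z $ j) powi (mi j))" for z :: "complex^'n"
    have chie: "\<chi>m (ee t) = cis (2 * pi * (m \<bullet> t))" for t
    proof -
      have "\<chi>m (ee t) = (\<Prod>j\<in>UNIV. cis (2 * pi * (m$j * t$j)))"
        by (simp add: \<chi>m_def ee_def cis_power_int mr algebra_simps)
      also have "\<dots> = cis (\<Sum>j\<in>UNIV. 2 * pi * (m$j * t$j))" by (simp add: cis_sum)
      also have "\<dots> = cis (2 * pi * (m \<bullet> t))"
        by (simp add: inner_vec_def sum_distrib_left)
      finally show ?thesis .
    qed
    have chiK: "\<chi>m z = cis (2 * pi * K z)" if z: "z \<in> torus" for z
    proof -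
      have "k z \<in> topspace Y" using ck z by (auto simp: continuous_map_def)
      then obtain t where t: "k z = q (ee t)" using qtor by blast
      have "z = h (k z)" using hk' z by simp
      also have "\<dots> = ee (\<Lambda> t)" using t eL by (simp add: \<Phi>_def)
      finally have "\<chi>m z = cis (2 * pi * u t)" by (simp add: chie u_def)
      also have "u t = K z" by (simp add: K_def t Uq)
      finally show ?thesis .
    qed
    have "m \<bullet> t - K (ee t) \<in> \<int>" for t
    proof -
      have "cis (2 * pi * (m \<bullet> t)) = cis (2 * pi * K (ee t))"
        using chie[of t] chiK[OF ee_torus, of t] by simp
      then show ?thesis by (simp only: cis_2pi_eq)
    qed
    note intK = this
    have cc: "continuous_on UNIV (\<lambda>t. m \<bullet> t - K (ee t))"
      by (intro continuous_intros cKe)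
    obtain c where c: "\<forall>t\<in>UNIV. m \<bullet> t - K (ee t) = c"
      using int_valued_const[OF connected_UNIV cc] intK by blast
    have "m $ i = 0" for i
    proof -
      have "m \<bullet> axis i 1 - K (ee (axis i 1)) = m \<bullet> 0 - K (ee 0)" using c ee_zero by (metis UNIV_I ee_axis)
      then show ?thesis by (simp add: ee_zero inner_axis)
    qed
    then show False using m0 by (simp add: vec_eq_iff)
  qed
  show ?thesis
  proof (intro ballI)
    fix g and x :: "complex^'n" assume g: "g \<in> carrier F" and x: "x \<in> torus"
    obtain B C where cB: "continuous_on UNIV B" and eB: "\<And>t. \<phi> g (ee t) = ee (B t)"
      and CI: "\<And>j. IntV (C j)" and dB: "\<And>t j. B (t + axis j 1) = B t + C j"
      using glift[OF g] by blast
    obtain d where d: "\<And>t. \<Lambda> (B t) = \<Lambda> t + d" using LB[OF g cB eB] by blast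
    have Cj: "C j = axis j 1" for j
    proof -
      have "\<Lambda> (B 0) + (\<Sum>i\<in>UNIV. C j $ i *\<^sub>R M i) = \<Lambda> (B 0 + C j)" using Lv[OF CI] by simp
      also have "\<dots> = \<Lambda> (B (0 + axis j 1))" using dB[of 0 j] by simp
      also have "\<dots> = \<Lambda> 0 + M j + d" using d dL[of 0 j] by simp
      finally have "(\<Sum>i\<in>UNIV. C j $ i *\<^sub>R M i) = M j" using d[of 0] by simp
      moreover have "(\<Sum>i\<in>UNIV. axis j 1 $ i *\<^sub>R M i) = M j"
      proof -
        have "(\<Sum>i\<in>UNIV. axis j 1 $ i *\<^sub>R M i) = (\<Sum>i\<in>UNIV. if i = j then M i else 0)"
          by (rule sum.cong) (auto simp: axis_def)
        then show ?thesis by simp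
      qed
      ultimately have "(\<Sum>i\<in>UNIV. (C j - axis j 1) $ i *\<^sub>R M i) = 0"
        by (simp add: scaleR_diff_left sum_subtractf)
      then have "C j - axis j 1 = 0" using noker IntV_diff[OF CI IntV_axis] by blast
      then show ?thesis by simp
    qed
    have "\<forall>x\<in>(torus::(complex^'n) set). \<phi> g x = x"
      using aut_trivial[of "\<phi> g" B] gaut[OF g] cB eB dB Cj by auto
    then show "\<phi> g x = x" using x by blast
  qed
qed

end
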